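(* Let $A$ be a real $2\times 2$ matrix and $B$ a real $1\times 2$ matrix, and let $\mathrm{NT}=\{\vec{x}\in\mathbb{R}^2 : BA^k\vec{x}>0 \text{ for all integers } k\ge 0\}$. Suppose $A$ has a positive eigenvalue and has an eigenvector $\vec{\alpha}$ with $B\vec{\alpha}=0$. If there is a vector $\vec{\xi}\in\mathbb{R}^2$ with $B\vec{\xi}>0$ and $BA\vec{\xi}\le 0$, then $\mathrm{NT}=\emptyset$.
   Context: $\mathrm{NT}$ is the non-termination set of the loop "while $(B\vec{x}>0)$ $\{\vec{x}:=A\vec{x}\}$". *)

theory Defs
  imports "HOL-Analysis.Analysis"
begin

fun matpow :: "('a::semiring_1) ^'n^'n \<Rightarrow> nat \<Rightarrow> 'a^'n^'n" where
  "matpow A 0 = mat 1"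
| "matpow A (Suc k) = A ** matpow A k"

definition is_eigenvector :: "real^'n^'n \<Rightarrow> real^'n \<Rightarrow> real \<Rightarrow> bool" where
  "is_eigenvector A v lam \<longleftrightarrow> v \<noteq> 0 \<and> A *v v = lam *\<^sub>R v"

definition is_eigenvalue :: "real^'n^'n \<Rightarrow> real \<Rightarrow> bool" where
  "is_eigenvalue A lam \<longleftrightarrow> (\<exists>v. is_eigenvector A v lam)"

text \<open>Non-termination set of  while (B x > 0) { x := A x }, B a 1 x n matrix.\<close>
definition NT :: "real^'n^'n \<Rightarrow> real^'n^1 \<Rightarrow> (real^'n) set" where
  "NT A B = {x. \<forall>k::nat. (B *v (matpow A k *v x)) $ 1 > 0}"

end

theory Submission
  imports Defs
begin

lemma comp2: "(M *v (x::real^2)) $ i = M$i$1 * x$1 + M$i$2 * x$2"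
  by (simp add: matrix_vector_mult_def sum_2)

lemma vec2_eq: "(v::real^2) = 0 \<longleftrightarrow> v$1 = 0 \<and> v$2 = 0"
  by (metis (mono_tags, lifting) exhaust_2 vec_eq_iff zero_index)

theorem lemma5:
  fixes A :: "real^2^2" and B :: "real^2^1"
  assumes "\<exists>lam > 0. is_eigenvalue A lam"
    and "\<exists>alpha mu. is_eigenvector A alpha mu \<and> B *v alpha = 0"
    and "\<exists>xi. (B *v xi) $ 1 > 0 \<and> (B *v (A *v xi)) $ 1 \<le> 0"
  shows "NT A B = {}"
proof (rule ccontr)
  assume "NT A B \<noteq> {}"
  then obtain x where x: "x \<in> NT A B" by blast
  obtain alpha mu where am: "alpha \<noteq> 0" "A *v alpha = mu *\<^sub>R alpha" "B *v alpha = 0"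
    using assms(2) unfolding is_eigenvector_def by blast
  obtain xi where xi: "(B *v xi) $ 1 > 0" "(B *v (A *v xi)) $ 1 \<le> 0" using assms(3) by blast
  define C where "C = B ** A"
  have fC: "\<And>v. (B *v (A *v v)) = C *v v" unfolding C_def by (simp add: matrix_vector_mul_assoc)
  have xa: "\<forall>k. (B *v (matpow A k *v x)) $ 1 > 0" using x unfolding NT_def by simp
  have gx: "(B *v x) $ 1 > 0" using spec[OF xa, of 0] by simp
  have m1: "matpow A 1 = A" by simp
  have fx: "(C *v x) $ 1 > 0" using spec[OF xa, of 1] unfolding m1 fC .
  have Ca: "C *v alpha = 0" using am by (simp add: fC[symmetric] matrix_vector_mult_scaleR)
  have e1: "B$1$1 * alpha$1 + B$1$2 * alpha$2 = 0" using am(3) comp2[of B alpha 1] by simp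
  have e2: "C$1$1 * alpha$1 + C$1$2 * alpha$2 = 0" using Ca comp2[of C alpha 1] by simp
  have det: "C$1$1 * B$1$2 - C$1$2 * B$1$1 = 0"
  proof -
    have r1: "C$1$1 * alpha$1 = - (C$1$2 * alpha$2)" using e2 by linarith
    have r2: "B$1$1 * alpha$1 = - (B$1$2 * alpha$2)" using e1 by linarith
    have r3: "C$1$2 * alpha$2 = - (C$1$1 * alpha$1)" using e2 by linarith
    have r4: "B$1$2 * alpha$2 = - (B$1$1 * alpha$1)" using e1 by linarith
    have "(C$1$1 * B$1$2 - C$1$2 * B$1$1) * alpha$1 = (C$1$1 * alpha$1) * B$1$2 - C$1$2 * (B$1$1 * alpha$1)"
      by (simp add: algebra_simps)
    also have "\<dots> = 0" unfolding r1 r2 by (simp add: algebra_simps)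
    finally have "(C$1$1 * B$1$2 - C$1$2 * B$1$1) * alpha$1 = 0" .
    moreover have "(C$1$1 * B$1$2 - C$1$2 * B$1$1) * alpha$2 = C$1$1 * (B$1$2 * alpha$2) - (C$1$2 * alpha$2) * B$1$1"
      by (simp add: algebra_simps)
    moreover have "C$1$1 * (B$1$2 * alpha$2) - (C$1$2 * alpha$2) * B$1$1 = 0" unfolding r3 r4 by (simp add: algebra_simps)
    ultimately show ?thesis using am(1) vec2_eq by (metis mult_eq_0_iff)
  qed
  have key: "(C *v x)$1 * (B *v xi)$1 = (C *v xi)$1 * (B *v x)$1"
  proof -
    have "(C *v x)$1 * (B *v xi)$1 - (C *v xi)$1 * (B *v x)$1
      = (C$1$1 * B$1$2 - C$1$2 * B$1$1) * (x$1 * xi$2 - x$2 * xi$1)"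
      unfolding comp2 by (simp add: algebra_simps)
    then show ?thesis using det by simp
  qed
  have "(C *v x)$1 * (B *v xi)$1 > 0" using fx xi(1) by simp
  moreover have "(C *v xi)$1 * (B *v x)$1 \<le> 0"
    using xi(2) gx fC[of xi] by (simp add: mult_nonpos_nonneg)
  ultimately show False using key by simp
qed

end
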